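(* Let $G$ be an M-graph and let $D$ be an effective real divisor on $G$. Then $D$ is linearly equivalent to a totally real effective divisor on $G$.
   Context: A finite graph $G$ has vertex set $V(G)$, edge set $E(G)$ and incidence function $\psi$ assigning to each edge a set of one or two vertices (loops and multiple edges allowed); $G$ is assumed connected, with genus $g(G)=|E(G)|-|V(G)|+1$ (for a possibly disconnected graph $H$, $g(H)=c(H)+|E(H)|-|V(H)|$ with $c(H)$ its number of components). A real structure is a pair of involutions of $V(G)$, $E(G)$, written $v\mapsto\overline v$, $e\mapsto\overline e$, with $\psi(\overline e)=\overline{\psi(e)}$. Real vertices/edges are the fixed ones; $V_{\mathbb R}(G)$ is the set of real vertices; a real edge is isolated if not all of its ends are real, non-isolated otherwise. $G(\mathbb R)$ is the subgraph with vertices $V_{\mathbb R}(G)$ and edges the non-isolated real edges. $s(G)=e^i(G)+\sum_i(g(G(\mathbb R)_i)+1)$, the sum over the connected components $G(\mathbb R)_i$ of $G(\mathbb R)$ and $e^i(G)$ the number of isolated real edges. $G$ is an M-graph if it has no isolated real edge and $s(G)=g(G)+1$. Divisors are formal $\mathbb Z$-combinations of vertices; $\overline D(v)=D(\overline v)$; $D$ is real if $\overline D=D$, and totally real if moreover its support is contained in $V_{\mathbb R}(G)$. For $f:V(G)\to\mathbb Z$, $\Delta(f)(v)=\sum_{e,\,\psi(e)=\{v,w\}}(f(w)-f(v))$; $D_1\sim D_2$ iff $D_2-D_1=\Delta(f)$ for some $f$. *)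

theory Defs
  imports Main
begin

text \<open>A finite graph is given by a vertex set V, an edge set E and an incidence
 function psi assigning to each edge a set of one or two vertices (loops and multiple
 edges allowed).\<close>

definition graph :: "'v set \<Rightarrow> 'e set \<Rightarrow> ('e \<Rightarrow> 'v set) \<Rightarrow> bool" where
  "graph V E psi \<longleftrightarrow> finite V \<and> finite E \<and>
     (\<forall>e\<in>E. psi e \<subseteq> V \<and> psi e \<noteq> {} \<and> card (psi e) \<le> 2)"

definition adj :: "'e set \<Rightarrow> ('e \<Rightarrow> 'v set) \<Rightarrow> ('v \<times> 'v) set" where
  "adj E' psi = {(v, w). \<exists>e\<in>E'. psi e = {v, w}}"

definition connected_graph :: "'v set \<Rightarrow> 'e set \<Rightarrow> ('e \<Rightarrow> 'v set) \<Rightarrow> bool" where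
  "connected_graph V E psi \<longleftrightarrow> V \<noteq> {} \<and> (\<forall>v\<in>V. \<forall>w\<in>V. (v, w) \<in> (adj E psi)\<^sup>*)"

text \<open>connected components (as vertex sets) of the subgraph (V', E'), where every
 edge of E' has its ends in V'\<close>
definition components :: "'v set \<Rightarrow> 'e set \<Rightarrow> ('e \<Rightarrow> 'v set) \<Rightarrow> 'v set set" where
  "components V' E' psi = {{w \<in> V'. (v, w) \<in> (adj E' psi)\<^sup>*} | v. v \<in> V'}"

definition genus :: "'v set \<Rightarrow> 'e set \<Rightarrow> int" where
  "genus V E = int (card E) - int (card V) + 1"

definition real_structure ::
  "'v set \<Rightarrow> 'e set \<Rightarrow> ('e \<Rightarrow> 'v set) \<Rightarrow> ('v \<Rightarrow> 'v) \<Rightarrow> ('e \<Rightarrow> 'e) \<Rightarrow> bool" where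
  "real_structure V E psi sv se \<longleftrightarrow>
     (\<forall>v\<in>V. sv v \<in> V \<and> sv (sv v) = v) \<and>
     (\<forall>e\<in>E. se e \<in> E \<and> se (se e) = e \<and> psi (se e) = sv ` psi e)"

definition real_vertices :: "'v set \<Rightarrow> ('v \<Rightarrow> 'v) \<Rightarrow> 'v set" where
  "real_vertices V sv = {v \<in> V. sv v = v}"

definition isolated_real_edges ::
  "'v set \<Rightarrow> 'e set \<Rightarrow> ('e \<Rightarrow> 'v set) \<Rightarrow> ('v \<Rightarrow> 'v) \<Rightarrow> ('e \<Rightarrow> 'e) \<Rightarrow> 'e set" where
  "isolated_real_edges V E psi sv se =
     {e \<in> E. se e = e \<and> \<not> psi e \<subseteq> real_vertices V sv}"

definition real_edges ::
  "'v set \<Rightarrow> 'e set \<Rightarrow> ('e \<Rightarrow> 'v set) \<Rightarrow> ('v \<Rightarrow> 'v) \<Rightarrow> ('e \<Rightarrow> 'e) \<Rightarrow> 'e set" where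
  "real_edges V E psi sv se =
     {e \<in> E. se e = e \<and> psi e \<subseteq> real_vertices V sv}"

definition s_inv ::
  "'v set \<Rightarrow> 'e set \<Rightarrow> ('e \<Rightarrow> 'v set) \<Rightarrow> ('v \<Rightarrow> 'v) \<Rightarrow> ('e \<Rightarrow> 'e) \<Rightarrow> int" where
  "s_inv V E psi sv se =
     int (card (isolated_real_edges V E psi sv se)) +
     (\<Sum>C\<in>components (real_vertices V sv) (real_edges V E psi sv se) psi.
        genus C {e \<in> real_edges V E psi sv se. psi e \<subseteq> C} + 1)"

definition M_graph ::
  "'v set \<Rightarrow> 'e set \<Rightarrow> ('e \<Rightarrow> 'v set) \<Rightarrow> ('v \<Rightarrow> 'v) \<Rightarrow> ('e \<Rightarrow> 'e) \<Rightarrow> bool" where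
  "M_graph V E psi sv se \<longleftrightarrow>
     isolated_real_edges V E psi sv se = {} \<and>
     s_inv V E psi sv se = genus V E + 1"

definition divisor :: "'v set \<Rightarrow> ('v \<Rightarrow> int) \<Rightarrow> bool" where
  "divisor V D \<longleftrightarrow> (\<forall>v. v \<notin> V \<longrightarrow> D v = 0)"

definition effective :: "'v set \<Rightarrow> ('v \<Rightarrow> int) \<Rightarrow> bool" where
  "effective V D \<longleftrightarrow> (\<forall>v\<in>V. D v \<ge> 0)"

definition real_divisor :: "'v set \<Rightarrow> ('v \<Rightarrow> 'v) \<Rightarrow> ('v \<Rightarrow> int) \<Rightarrow> bool" where
  "real_divisor V sv D \<longleftrightarrow> (\<forall>v\<in>V. D (sv v) = D v)"

definition totally_real :: "'v set \<Rightarrow> ('v \<Rightarrow> 'v) \<Rightarrow> ('v \<Rightarrow> int) \<Rightarrow> bool" where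
  "totally_real V sv D \<longleftrightarrow> real_divisor V sv D \<and>
     (\<forall>v\<in>V. D v \<noteq> 0 \<longrightarrow> v \<in> real_vertices V sv)"

text \<open>Laplacian: Delta(f)(v) = sum over edges e with psi e = {v,w} of (f w - f v);
 loops contribute 0.\<close>
definition laplacian :: "'e set \<Rightarrow> ('e \<Rightarrow> 'v set) \<Rightarrow> ('v \<Rightarrow> int) \<Rightarrow> 'v \<Rightarrow> int" where
  "laplacian E psi f v =
     (\<Sum>e\<in>{e \<in> E. v \<in> psi e}. \<Sum>w\<in>psi e - {v}. f w - f v)"

definition lin_equiv ::
  "'v set \<Rightarrow> 'e set \<Rightarrow> ('e \<Rightarrow> 'v set) \<Rightarrow> ('v \<Rightarrow> int) \<Rightarrow> ('v \<Rightarrow> int) \<Rightarrow> bool" where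
  "lin_equiv V E psi D1 D2 \<longleftrightarrow>
     (\<exists>f :: 'v \<Rightarrow> int. \<forall>v\<in>V. D2 v - D1 v = laplacian E psi f v)"

end

theory Submission imports Defs begin

definition blk :: "'v set set \<Rightarrow> ('v \<times> 'v) set" where
  "blk P = {(v,w). \<exists>B\<in>P. v \<in> B \<and> w \<in> B}"

lemma adj_sym: "(v,w) \<in> adj X psi \<Longrightarrow> (w,v) \<in> adj X psi"
  unfolding adj_def by (auto simp: insert_commute)

lemma adj_insert: "adj (insert x X) psi = adj X psi \<union> {(v,w). psi x = {v,w}}"
  unfolding adj_def by auto

lemma adj_mono: "X \<subseteq> Y \<Longrightarrow> adj X psi \<subseteq> adj Y psi"
  unfolding adj_def by auto

lemma disjD: "\<forall>B\<in>P. \<forall>B'\<in>P. B \<noteq> B' \<longrightarrow> B \<inter> B' = {} \<Longrightarrow> B \<in> P \<Longrightarrow> B' \<in> P \<Longrightarrow> x \<in> B \<Longrightarrow> x \<in> B' \<Longrightarrow> B = B'"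
  by blast

lemma blk_rtrancl:
  assumes disj: "\<forall>B\<in>P. \<forall>B'\<in>P. B \<noteq> B' \<longrightarrow> B \<inter> B' = {}"
    and "(v,w) \<in> (blk P)\<^sup>*"
  shows "(v,w) \<in> blk P \<union> Id"
  using assms(2)
proof (induction rule: rtrancl_induct)
  case base then show ?case by simp
next
  case (step y z)
  from step.hyps(2) obtain B where B: "B \<in> P" "y \<in> B" "z \<in> B" unfolding blk_def by auto
  from step.IH show ?case
  proof
    assume "(v,y) \<in> blk P"
    then obtain B' where "B' \<in> P" "v \<in> B'" "y \<in> B'" unfolding blk_def by auto
    with B disj have "B = B'" using disjD by metis
    with B \<open>v \<in> B'\<close> show ?case unfolding blk_def by auto
  next
    assume "(v,y) \<in> Id" with step.hyps(2) show ?case by auto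
  qed
qed

lemma L0:
  assumes "finite X"
  shows "finite P \<Longrightarrow> (\<forall>e\<in>X. \<exists>a b. psi e = {a,b} \<and> a \<in> V \<and> b \<in> V) \<Longrightarrow>
    (\<forall>B\<in>P. B \<noteq> {}) \<Longrightarrow> (\<forall>B\<in>P. \<forall>B'\<in>P. B \<noteq> B' \<longrightarrow> B \<inter> B' = {}) \<Longrightarrow> \<Union>P = V \<Longrightarrow>
    (\<forall>v\<in>V. \<forall>w\<in>V. (v,w) \<in> (blk P \<union> adj X psi)\<^sup>*) \<Longrightarrow> card P \<le> card X + 1"
using assms proof (induction X arbitrary: P rule: finite_induct)
  case empty
  show ?case
  proof (rule ccontr)
    assume "\<not> card P \<le> card {} + 1"
    then have c2: "card P \<ge> 2" by simp
    then have "P \<noteq> {}" by auto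
    then obtain B where B: "B \<in> P" by auto
    have "card (P - {B}) \<ge> 1" using c2 B empty.prems(1) by auto
    then have "P - {B} \<noteq> {}" by (metis card.empty not_one_le_zero)
    then obtain B' where B': "B' \<in> P" "B' \<noteq> B" by auto
    obtain v where v: "v \<in> B" using B empty.prems(3) by auto
    obtain w where w: "w \<in> B'" using B' empty.prems(3) by auto
    have vw: "v \<in> V" "w \<in> V" using v w B B' empty.prems(5) by auto
    have "(v,w) \<in> (blk P)\<^sup>*" using empty.prems(6) vw by (simp add: adj_def)
    then have "(v,w) \<in> blk P \<union> Id" using blk_rtrancl empty.prems(4) by metis
    moreover have "v \<noteq> w" using v w B B' empty.prems(4) by blast
    ultimately obtain B'' where "B'' \<in> P" "v \<in> B''" "w \<in> B''" unfolding blk_def by auto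
    then have "B'' = B" "B'' = B'" using v w B B' disjD[OF empty.prems(4)] by metis+
    then show False using B' by simp
  qed
next
  case (insert x X)
  obtain a b where ab: "psi x = {a,b}" "a \<in> V" "b \<in> V" using insert.prems(2) by auto
  obtain Ba where Ba: "Ba \<in> P" "a \<in> Ba" using insert.prems(5) ab by auto
  obtain Bb where Bb: "Bb \<in> P" "b \<in> Bb" using insert.prems(5) ab by auto
  have Xpsi: "\<forall>e\<in>X. \<exists>a b. psi e = {a,b} \<and> a \<in> V \<and> b \<in> V" using insert.prems(2) by auto
  show ?case
  proof (cases "Ba = Bb")
    case True
    have sub: "blk P \<union> adj (insert x X) psi \<subseteq> (blk P \<union> adj X psi)\<^sup>*"
    proof
      fix p assume "p \<in> blk P \<union> adj (insert x X) psi"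
      then consider "p \<in> blk P" | "p \<in> adj X psi" | "\<exists>v w. p = (v,w) \<and> psi x = {v,w}"
        by (auto simp: adj_insert)
      then show "p \<in> (blk P \<union> adj X psi)\<^sup>*"
      proof cases
        case 3 then obtain v w where "p=(v,w)" "{v,w} = {a,b}" using ab by auto
        then have "v \<in> {a,b}" "w \<in> {a,b}" by (metis insertI1 insert_commute)+
        then have "v \<in> Ba" "w \<in> Ba" using True Ba Bb by auto
        then have "p \<in> blk P" using Ba \<open>p=(v,w)\<close> unfolding blk_def by auto
        then show ?thesis by auto
      qed auto
    qed
    have "\<forall>v\<in>V. \<forall>w\<in>V. (v,w) \<in> (blk P \<union> adj X psi)\<^sup>*"
      using insert.prems(6) rtrancl_subset_rtrancl[OF sub] by blast
    then have "card P \<le> card X + 1" using insert.IH[of P] insert.prems Xpsi by auto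
    then show ?thesis using insert by simp
  next
    case False
    define P' where "P' = insert (Ba \<union> Bb) (P - {Ba, Bb})"
    have disj: "\<forall>B\<in>P. \<forall>B'\<in>P. B \<noteq> B' \<longrightarrow> B \<inter> B' = {}" using insert.prems(4) .
    have notin: "Ba \<union> Bb \<notin> P - {Ba, Bb}"
    proof
      assume "Ba \<union> Bb \<in> P - {Ba, Bb}"
      then have "Ba \<union> Bb \<in> P" "Ba \<union> Bb \<noteq> Ba" by auto
      then show False using disjD[OF disj, of "Ba \<union> Bb" Ba a] Ba by auto
    qed
    have fP: "finite P" using insert.prems(1) .
    have c2: "card P \<ge> 2"
    proof -
      have "{Ba, Bb} \<subseteq> P" using Ba Bb by auto
      then have "card {Ba,Bb} \<le> card P" using fP card_mono by blast
      then show ?thesis using False by simp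
    qed
    have cP': "card P' = card P - 1"
    proof -
      have "card (P - {Ba, Bb}) = card P - 2" using Ba Bb False fP
        by (simp add: card_Diff_subset)
      then show ?thesis unfolding P'_def using notin fP c2 by simp
    qed
    have "card P' \<le> card X + 1"
    proof (rule insert.IH)
      show "finite P'" unfolding P'_def using fP by simp
      show "\<forall>e\<in>X. \<exists>a b. psi e = {a,b} \<and> a \<in> V \<and> b \<in> V" using Xpsi .
      show "\<forall>B\<in>P'. B \<noteq> {}" unfolding P'_def using insert.prems(3) Ba by auto
      show "\<forall>B\<in>P'. \<forall>B'\<in>P'. B \<noteq> B' \<longrightarrow> B \<inter> B' = {}"
        unfolding P'_def using disj Ba Bb by blast
      show "\<Union>P' = V" unfolding P'_def using insert.prems(5) Ba Bb by blast
      have sub: "blk P \<union> adj (insert x X) psi \<subseteq> (blk P' \<union> adj X psi)\<^sup>*"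
      proof
        fix p assume "p \<in> blk P \<union> adj (insert x X) psi"
        then consider "p \<in> blk P" | "p \<in> adj X psi" | "\<exists>v w. p = (v,w) \<and> psi x = {v,w}"
          by (auto simp: adj_insert)
        then show "p \<in> (blk P' \<union> adj X psi)\<^sup>*"
        proof cases
          case 1
          then obtain v w B where "p = (v,w)" "B \<in> P" "v \<in> B" "w \<in> B" unfolding blk_def by auto
          then have "p \<in> blk P'" unfolding blk_def P'_def
            by (cases "B = Ba \<or> B = Bb") auto
          then show ?thesis by auto
        next
          case 3 then obtain v w where "p=(v,w)" "{v,w} = {a,b}" using ab by auto
          then have "v \<in> {a,b}" "w \<in> {a,b}" by (metis insertI1 insert_commute)+
          then have "v \<in> Ba \<union> Bb" "w \<in> Ba \<union> Bb" using Ba Bb by auto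
          then have "p \<in> blk P'" using \<open>p=(v,w)\<close> unfolding blk_def P'_def by auto
          then show ?thesis by auto
        qed auto
      qed
      show "\<forall>v\<in>V. \<forall>w\<in>V. (v,w) \<in> (blk P' \<union> adj X psi)\<^sup>*"
        using insert.prems(6) rtrancl_subset_rtrancl[OF sub] by blast
    qed
    then show ?thesis using cP' c2 insert by simp
  qed
qed

locale mg =
  fixes V :: "'v set" and E :: "'e set" and psi :: "'e \<Rightarrow> 'v set"
    and sv :: "'v \<Rightarrow> 'v" and se :: "'e \<Rightarrow> 'e"
  assumes gr: "graph V E psi"
    and con: "connected_graph V E psi"
    and rs: "real_structure V E psi sv se"
    and mgr: "M_graph V E psi sv se"
begin

abbreviation "VR \<equiv> real_vertices V sv"
abbreviation "ER \<equiv> real_edges V E psi sv se"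
abbreviation "RR \<equiv> adj ER psi"
definition "comp_of v = {w \<in> VR. (v,w) \<in> RR\<^sup>*}"
abbreviation "comps \<equiv> components VR ER psi"
definition "NE = {e \<in> E. se e \<noteq> e}"
definition "Pr = {{v, sv v} | v. v \<in> V - VR}"

lemma finV: "finite V" and finE: "finite E" using gr unfolding graph_def by auto

lemma psiV: "e \<in> E \<Longrightarrow> psi e \<subseteq> V" using gr unfolding graph_def by auto

lemma psi_two: assumes "e \<in> E" shows "\<exists>a b. psi e = {a,b}"
proof -
  have ne: "psi e \<noteq> {}" and c: "card (psi e) \<le> 2" using gr assms unfolding graph_def by auto
  have f: "finite (psi e)" using psiV[OF assms] finV finite_subset by blast
  obtain a where a: "a \<in> psi e" using ne by auto
  have "card (psi e - {a}) \<le> 1" using c a f by auto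
  then have "psi e - {a} = {} \<or> (\<exists>b. psi e - {a} = {b})"
    using f by (metis card_0_eq card_1_singletonE finite_Diff le_Suc_eq le_zero_eq One_nat_def)
  then show ?thesis using a by (metis insert_Diff insert_absorb2)
qed

lemma sv_V: "v \<in> V \<Longrightarrow> sv v \<in> V" and sv_sv: "v \<in> V \<Longrightarrow> sv (sv v) = v"
  using rs unfolding real_structure_def by auto

lemma se_E: "e \<in> E \<Longrightarrow> se e \<in> E" and se_se: "e \<in> E \<Longrightarrow> se (se e) = e"
  and psi_se: "e \<in> E \<Longrightarrow> psi (se e) = sv ` psi e"
  using rs unfolding real_structure_def by auto

lemma noiso: "isolated_real_edges V E psi sv se = {}" using mgr unfolding M_graph_def by auto

lemma E_split: "E = ER \<union> NE" "ER \<inter> NE = {}"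
  using noiso unfolding NE_def real_edges_def isolated_real_edges_def by auto

lemma ER_psi: "e \<in> ER \<Longrightarrow> psi e \<subseteq> VR" "e \<in> ER \<Longrightarrow> e \<in> E" "e \<in> ER \<Longrightarrow> se e = e"
  unfolding real_edges_def by auto

lemma VR_sub: "VR \<subseteq> V" unfolding real_vertices_def by auto

lemma RR_sym: "sym (RR\<^sup>*)"
  by (rule sym_rtrancl) (auto simp: sym_def intro: adj_sym)

lemma comp_of_self: "v \<in> VR \<Longrightarrow> v \<in> comp_of v" unfolding comp_of_def by auto

lemma comp_of_eq: assumes "w \<in> comp_of v1" "w \<in> comp_of v2" shows "comp_of v1 = comp_of v2"
proof -
  have a: "(v1,w) \<in> RR\<^sup>*" "(v2,w) \<in> RR\<^sup>*" using assms unfolding comp_of_def by auto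
  then have "(w,v2) \<in> RR\<^sup>*" using RR_sym by (meson symD)
  then have "(v1,v2) \<in> RR\<^sup>*" using a by auto
  moreover have "(v2,v1) \<in> RR\<^sup>*" using calculation RR_sym by (meson symD)
  ultimately show ?thesis unfolding comp_of_def by (auto intro: rtrancl_trans)
qed

lemma comps_eq: "comps = comp_of ` VR"
  unfolding components_def comp_of_def by auto

lemma comps_disj: assumes a: "C1 \<in> comps" "C2 \<in> comps" "C1 \<noteq> C2" shows "C1 \<inter> C2 = {}"
proof (rule ccontr)
  assume "C1 \<inter> C2 \<noteq> {}"
  then obtain w where w: "w \<in> C1" "w \<in> C2" by auto
  from a obtain v1 v2 where "C1 = comp_of v1" "C2 = comp_of v2" unfolding comps_eq by auto
  then show False using comp_of_eq[of w v1 v2] w a(3) by simp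
qed

lemma comps_union: "\<Union>comps = VR"
proof
  show "\<Union>comps \<subseteq> VR" unfolding comps_eq comp_of_def by auto
  show "VR \<subseteq> \<Union>comps"
  proof
    fix v assume "v \<in> VR"
    then have "v \<in> comp_of v" "comp_of v \<in> comps" using comp_of_self comps_eq by auto
    then show "v \<in> \<Union>comps" by blast
  qed
qed

lemma comps_ne: "C \<in> comps \<Longrightarrow> C \<noteq> {}"
  unfolding comps_eq using comp_of_self by blast

lemma fin_VR: "finite VR" using finV VR_sub finite_subset by blast
lemma fin_comps: "finite comps" unfolding comps_eq using fin_VR by simp
lemma fin_comp: "C \<in> comps \<Longrightarrow> finite C" using comps_union fin_VR by (metis Union_upper finite_subset)

lemma edge_comp: assumes "e \<in> ER" shows "\<exists>C\<in>comps. psi e \<subseteq> C"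
proof -
  obtain a b where ab: "psi e = {a,b}" using psi_two ER_psi(2)[OF assms] by blast
  have ins: "a \<in> VR" "b \<in> VR" using ER_psi(1)[OF assms] ab by auto
  have "(a,b) \<in> RR" unfolding adj_def using assms ab by auto
  then have "b \<in> comp_of a" using ins unfolding comp_of_def by auto
  then have "psi e \<subseteq> comp_of a" using ab comp_of_self[OF ins(1)] by auto
  then show ?thesis using ins comps_eq by auto
qed

lemma fin_ER: "finite ER" by (rule finite_subset[OF _ finE]) (auto simp: real_edges_def)
lemma fin_NE: "finite NE" by (rule finite_subset[OF _ finE]) (auto simp: NE_def)

lemma sum_EC: "(\<Sum>C\<in>comps. card {e \<in> ER. psi e \<subseteq> C}) = card ER"
proof -
  have "card (\<Union>C\<in>comps. {e \<in> ER. psi e \<subseteq> C}) = (\<Sum>C\<in>comps. card {e \<in> ER. psi e \<subseteq> C})"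
  proof (rule card_UN_disjoint)
    show "finite comps" by (rule fin_comps)
    show "\<forall>i\<in>comps. finite {e \<in> ER. psi e \<subseteq> i}" using fin_ER by auto
    show "\<forall>i\<in>comps. \<forall>j\<in>comps. i \<noteq> j \<longrightarrow> {e \<in> ER. psi e \<subseteq> i} \<inter> {e \<in> ER. psi e \<subseteq> j} = {}"
    proof (intro ballI impI)
      fix i j assume ij: "i \<in> comps" "j \<in> comps" "i \<noteq> j"
      show "{e \<in> ER. psi e \<subseteq> i} \<inter> {e \<in> ER. psi e \<subseteq> j} = {}"
      proof (rule ccontr)
        assume "{e \<in> ER. psi e \<subseteq> i} \<inter> {e \<in> ER. psi e \<subseteq> j} \<noteq> {}"
        then obtain e where e: "e \<in> ER" "psi e \<subseteq> i" "psi e \<subseteq> j" by auto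
        obtain a b where "psi e = {a,b}" using psi_two ER_psi(2)[OF e(1)] by blast
        then have "a \<in> i \<inter> j" using e by auto
        then show False using comps_disj[OF ij] by auto
      qed
    qed
  qed
  moreover have "(\<Union>C\<in>comps. {e \<in> ER. psi e \<subseteq> C}) = ER" using edge_comp by auto
  ultimately show ?thesis by simp
qed

lemma sum_C: "(\<Sum>C\<in>comps. card C) = card VR"
proof -
  have "card (\<Union>comps) = sum card comps"
  proof (rule card_Union_disjoint)
    show "pairwise disjnt comps" unfolding pairwise_def disjnt_def using comps_disj by blast
  qed (rule fin_comp)
  then show ?thesis using comps_union by simp
qed

lemma s_inv_eq: "s_inv V E psi sv se = int (card ER) - int (card VR) + 2 * int (card comps)"
proof -
  have "s_inv V E psi sv se = (\<Sum>C\<in>comps. int (card {e \<in> ER. psi e \<subseteq> C}) - int (card C) + 2)"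
    unfolding s_inv_def noiso genus_def by (simp add: algebra_simps)
  also have "\<dots> = int (\<Sum>C\<in>comps. card {e \<in> ER. psi e \<subseteq> C}) - int (\<Sum>C\<in>comps. card C) + 2 * int (card comps)"
    by (simp add: sum.distrib sum_subtractf of_nat_sum)
  finally show ?thesis using sum_EC sum_C by simp
qed

lemma nonreal_sv: assumes "v \<in> V - VR" shows "sv v \<in> V - VR" "sv v \<noteq> v"
proof -
  have v: "v \<in> V" "sv v \<noteq> v" using assms unfolding real_vertices_def by auto
  show "sv v \<noteq> v" using v by simp
  show "sv v \<in> V - VR" using v sv_V sv_sv unfolding real_vertices_def by force
qed

lemma Pr_sub: "B \<in> Pr \<Longrightarrow> B \<subseteq> V - VR" unfolding Pr_def using nonreal_sv by auto

lemma Pr_card: assumes "B \<in> Pr" shows "card B = 2"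
proof -
  obtain v where v: "B = {v, sv v}" "v \<in> V - VR" using assms unfolding Pr_def by auto
  then have "sv v \<noteq> v" using nonreal_sv by auto
  then show ?thesis using v by simp
qed

lemma Pr_disj: assumes "B1 \<in> Pr" "B2 \<in> Pr" "B1 \<noteq> B2" shows "B1 \<inter> B2 = {}"
proof (rule ccontr)
  assume "B1 \<inter> B2 \<noteq> {}"
  then obtain w where w: "w \<in> B1" "w \<in> B2" by auto
  obtain v1 v2 where v: "B1 = {v1, sv v1}" "B2 = {v2, sv v2}" "v1 \<in> V" "v2 \<in> V"
    using assms(1,2) unfolding Pr_def by auto
  have "B1 = {w, sv w}" using w(1) v(1,3) sv_sv by auto
  moreover have "B2 = {w, sv w}" using w(2) v(2,4) sv_sv by auto
  ultimately show False using assms(3) by simp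
qed

lemma Pr_union: "\<Union>Pr = V - VR"
proof
  show "\<Union>Pr \<subseteq> V - VR" using Pr_sub by blast
  show "V - VR \<subseteq> \<Union>Pr" unfolding Pr_def by blast
qed

lemma fin_Pr: "finite Pr"
proof -
  have "Pr = (\<lambda>v. {v, sv v}) ` (V - VR)" unfolding Pr_def by auto
  then show ?thesis using finV by simp
qed

lemma card_nonreal: "card (V - VR) = 2 * card Pr"
proof -
  have "card (\<Union>Pr) = sum card Pr"
  proof (rule card_Union_disjoint)
    show "pairwise disjnt Pr" unfolding pairwise_def disjnt_def using Pr_disj by blast
    show "\<And>A. A \<in> Pr \<Longrightarrow> finite A" using Pr_sub finV by (meson Diff_subset finite_subset)
  qed
  also have "\<dots> = 2 * card Pr" using Pr_card by simp
  finally show ?thesis using Pr_union by simp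
qed

lemma card_V: "card V = card VR + 2 * card Pr"
proof -
  have "card V = card VR + card (V - VR)"
    using finV VR_sub by (metis add.commute card_Diff_subset card_mono fin_VR le_add_diff_inverse)
  then show ?thesis using card_nonreal by simp
qed

lemma card_E: "card E = card ER + card NE"
  using card_Un_disjoint[OF fin_ER fin_NE E_split(2)] E_split(1) by simp

lemma main_count: "2 * card comps + 2 * card Pr = card NE + 2"
proof -
  have "s_inv V E psi sv se = genus V E + 1" using mgr unfolding M_graph_def by auto
  then have "int (card ER) - int (card VR) + 2 * int (card comps) =
     int (card ER + card NE) - int (card VR + 2 * card Pr) + 2"
    unfolding s_inv_eq genus_def card_V card_E by simp
  then show ?thesis by linarith
qed

lemma NE_se: "e \<in> NE \<Longrightarrow> se e \<in> NE \<and> se e \<noteq> e"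
  unfolding NE_def using se_E se_se by force

definition "ch e = (SOME z. z \<in> {e, se e})"

lemma ch_in: "ch e \<in> {e, se e}" unfolding ch_def by (rule someI_ex) auto

lemma ch_se: "e \<in> E \<Longrightarrow> ch (se e) = ch e"
proof -
  assume "e \<in> E"
  then have "{se e, se (se e)} = {e, se e}" using se_se by auto
  then show ?thesis unfolding ch_def by simp
qed

definition "XX e = insert e {e' \<in> NE - {e, se e}. ch e' = e'}"

lemma XX_props: assumes e: "e \<in> NE"
  shows "XX e \<subseteq> NE" "card NE = 2 * card (XX e)" "e \<in> XX e"
    "\<And>e'. e' \<in> NE \<Longrightarrow> e' \<notin> {e, se e} \<Longrightarrow> e' \<in> XX e - {e} \<or> se e' \<in> XX e - {e}"
proof -
  show X1: "XX e \<subseteq> NE" using e unfolding XX_def by auto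
  show "e \<in> XX e" unfolding XX_def by auto
  have NEE: "\<And>x. x \<in> NE \<Longrightarrow> x \<in> E" unfolding NE_def by auto
  show X4: "\<And>e'. e' \<in> NE \<Longrightarrow> e' \<notin> {e, se e} \<Longrightarrow> e' \<in> XX e - {e} \<or> se e' \<in> XX e - {e}"
  proof -
    fix e' assume a: "e' \<in> NE" "e' \<notin> {e, se e}"
    have s: "se e' \<in> NE" "se e' \<noteq> e'" using NE_se[OF a(1)] by auto
    have ee: "se (se e') = e'" "se (se e) = e" using NEE a(1) e se_se by auto
    have s2: "se e' \<notin> {e, se e}"
    proof
      assume "se e' \<in> {e, se e}"
      then have "se (se e') \<in> {se e, se (se e)}" by auto
      then show False using ee a(2) by auto
    qed
    consider "ch e' = e'" | "ch e' = se e'" using ch_in by auto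
    then show "e' \<in> XX e - {e} \<or> se e' \<in> XX e - {e}"
    proof cases
      case 1 then show ?thesis using a unfolding XX_def by auto
    next
      case 2
      have "ch (se e') = se e'" using 2 ch_se NEE[OF a(1)] by simp
      then show ?thesis using s s2 unfolding XX_def by auto
    qed
  qed
  have disj: "XX e \<inter> se ` XX e = {}"
  proof (rule ccontr)
    assume "XX e \<inter> se ` XX e \<noteq> {}"
    then obtain y z where yz: "y \<in> XX e" "z \<in> XX e" "y = se z" by auto
    have zE: "z \<in> E" "y \<in> E" using yz X1 NEE by auto
    have eE: "e \<in> E" using e NEE by auto
    show False
    proof (cases "y = e")
      case True
      then have "z = se e" using yz(3) se_se[OF zE(1)] by simp
      then show False using yz(2) NE_se[OF e] unfolding XX_def by auto
    next
      case False
      show False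
      proof (cases "z = e")
        case True
        then show False using yz(1,3) False unfolding XX_def by auto
      next
        case False2: False
        have "ch y = y" "ch z = z" using yz(1,2) False False2 unfolding XX_def by auto
        then have "y = z" using yz(3) ch_se[OF zE(1)] by simp
        then show False using yz(3) NE_se yz(2) X1 by auto
      qed
    qed
  qed
  have un: "NE = XX e \<union> se ` XX e"
  proof
    show "XX e \<union> se ` XX e \<subseteq> NE" using X1 NE_se by auto
    show "NE \<subseteq> XX e \<union> se ` XX e"
    proof
      fix x assume x: "x \<in> NE"
      show "x \<in> XX e \<union> se ` XX e"
      proof (cases "x \<in> {e, se e}")
        case True then show ?thesis using \<open>e \<in> XX e\<close> by auto
      next
        case False
        from X4[OF x False] show ?thesis
        proof
          assume "se x \<in> XX e - {e}"
          then have "se (se x) \<in> se ` XX e" by auto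
          then show ?thesis using se_se NEE[OF x] by auto
        qed auto
      qed
    qed
  qed
  have inj: "inj_on se (XX e)"
    by (rule inj_on_inverseI[where g=se]) (use X1 NEE se_se in auto)
  have fX: "finite (XX e)" using X1 fin_NE finite_subset by blast
  show "card NE = 2 * card (XX e)"
    using un disj card_Un_disjoint[OF fX] card_image[OF inj] fX by simp
qed
definition "PP = comps \<union> Pr"

lemma comps_sub: "C \<in> comps \<Longrightarrow> C \<subseteq> VR" using comps_union by blast

lemma PP_props: "finite PP" "\<forall>B\<in>PP. B \<noteq> {}" "\<forall>B\<in>PP. \<forall>B'\<in>PP. B \<noteq> B' \<longrightarrow> B \<inter> B' = {}"
  "\<Union>PP = V" "card PP = card comps + card Pr"
proof -
  show "finite PP" unfolding PP_def using fin_comps fin_Pr by simp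
  have prne: "\<forall>B\<in>Pr. B \<noteq> {}" using Pr_card by fastforce
  show "\<forall>B\<in>PP. B \<noteq> {}" unfolding PP_def using comps_ne prne by auto
  have cross: "\<And>C B. C \<in> comps \<Longrightarrow> B \<in> Pr \<Longrightarrow> C \<inter> B = {}"
    using comps_sub Pr_sub by blast
  show "\<forall>B\<in>PP. \<forall>B'\<in>PP. B \<noteq> B' \<longrightarrow> B \<inter> B' = {}"
  proof (intro ballI impI)
    fix B B' assume BB: "B \<in> PP" "B' \<in> PP" "B \<noteq> B'"
    show "B \<inter> B' = {}"
    proof (cases "B \<in> comps")
      case True
      show ?thesis
      proof (cases "B' \<in> comps")
        case True then show ?thesis using comps_disj \<open>B \<in> comps\<close> BB(3) by blast
      next
        case False then have "B' \<in> Pr" using BB(2) unfolding PP_def by auto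
        then show ?thesis using cross \<open>B \<in> comps\<close> by blast
      qed
    next
      case False then have BP: "B \<in> Pr" using BB(1) unfolding PP_def by auto
      show ?thesis
      proof (cases "B' \<in> comps")
        case True then show ?thesis using cross[OF True BP] by blast
      next
        case False then have "B' \<in> Pr" using BB(2) unfolding PP_def by auto
        then show ?thesis using Pr_disj BP BB(3) by blast
      qed
    qed
  qed
  show "\<Union>PP = V" unfolding PP_def using comps_union Pr_union VR_sub by auto
  have "comps \<inter> Pr = {}"
  proof (rule ccontr)
    assume "comps \<inter> Pr \<noteq> {}"
    then obtain B where "B \<in> comps" "B \<in> Pr" by auto
    then show False using cross[of B B] prne by auto
  qed
  then show "card PP = card comps + card Pr" unfolding PP_def
    using card_Un_disjoint[OF fin_comps fin_Pr] by simp
qed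

lemma blk_sym: "(v,w) \<in> blk P \<Longrightarrow> (w,v) \<in> blk P" unfolding blk_def by auto

lemma blk_sv: assumes "v \<in> V" shows "(v, sv v) \<in> blk PP" "(sv v, v) \<in> blk PP"
proof -
  show "(v, sv v) \<in> blk PP"
  proof (cases "v \<in> VR")
    case True
    then have "sv v = v" unfolding real_vertices_def by auto
    moreover have "comp_of v \<in> PP" "v \<in> comp_of v" using True comp_of_self comps_eq PP_def by auto
    ultimately show ?thesis unfolding blk_def by auto
  next
    case False
    then have "{v, sv v} \<in> PP" unfolding PP_def Pr_def using assms by auto
    then show ?thesis unfolding blk_def by auto
  qed
  then show "(sv v, v) \<in> blk PP" by (rule blk_sym)
qed

lemma blk_ER: assumes "e' \<in> ER" "psi e' = {a,b}" shows "(a,b) \<in> blk PP"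
proof -
  obtain C where "C \<in> comps" "psi e' \<subseteq> C" using edge_comp assms(1) by blast
  then show ?thesis using assms(2) unfolding blk_def PP_def by auto
qed

lemma NEE: "x \<in> NE \<Longrightarrow> x \<in> E" unfolding NE_def by auto

lemma edge_R: assumes e: "e \<in> NE" and e': "e' \<in> E" "e' \<notin> {e, se e}" and ab: "psi e' = {a,b}"
  shows "(a,b) \<in> (blk PP \<union> adj (XX e - {e}) psi)\<^sup>*"
proof (cases "e' \<in> ER")
  case True then show ?thesis using blk_ER ab by blast
next
  case False
  moreover have "e' \<in> ER \<union> NE" using e'(1) E_split(1) by blast
  ultimately have ne: "e' \<in> NE" by blast
  have abV: "a \<in> V" "b \<in> V" using psiV[OF e'(1)] ab by auto
  from XX_props(4)[OF e ne e'(2)] show ?thesis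
  proof
    assume "e' \<in> XX e - {e}"
    then have "(a,b) \<in> adj (XX e - {e}) psi" unfolding adj_def using ab by auto
    then show ?thesis by auto
  next
    assume "se e' \<in> XX e - {e}"
    moreover have "psi (se e') = {sv a, sv b}" using psi_se[OF e'(1)] ab by auto
    ultimately have "(sv a, sv b) \<in> adj (XX e - {e}) psi" unfolding adj_def by auto
    then have "(sv a, sv b) \<in> (blk PP \<union> adj (XX e - {e}) psi)\<^sup>*" by auto
    moreover have "(a, sv a) \<in> (blk PP \<union> adj (XX e - {e}) psi)\<^sup>*" using blk_sv(1)[OF abV(1)] by auto
    moreover have "(sv b, b) \<in> (blk PP \<union> adj (XX e - {e}) psi)\<^sup>*" using blk_sv(2)[OF abV(2)] by auto
    ultimately show ?thesis by (meson rtrancl_trans)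
  qed
qed

lemma R_sym: "sym ((blk P \<union> adj X psi)\<^sup>*)"
  by (rule sym_rtrancl) (auto simp: sym_def intro: adj_sym blk_sym)

lemma bridge:
  assumes e: "e \<in> E" "psi e = {u, x}" and u: "u \<in> V - VR" and x: "x \<notin> {u, sv u}"
    and w: "w1 \<in> {u, sv u}" "w2 \<in> {x, sv x}" "(w1, w2) \<in> (adj (E - {e, se e}) psi)\<^sup>*"
  shows False
proof -
  have eNE: "e \<in> NE"
  proof (rule ccontr)
    assume "e \<notin> NE"
    moreover have "e \<in> ER \<union> NE" using e(1) E_split(1) by blast
    ultimately have "e \<in> ER" by blast
    then show False using ER_psi(1) e(2) u by auto
  qed
  define X' where "X' = XX e - {e}"
  define R where "R = blk PP \<union> adj X' psi"
  have Rsym: "\<And>p q. (p,q) \<in> R\<^sup>* \<Longrightarrow> (q,p) \<in> R\<^sup>*" using R_sym unfolding R_def by (meson symD)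
  have xV: "x \<in> V" "u \<in> V" using psiV[OF e(1)] e(2) by auto
  have sub1: "adj (E - {e, se e}) psi \<subseteq> R\<^sup>*"
  proof
    fix p assume "p \<in> adj (E - {e, se e}) psi"
    then obtain a b e' where "p = (a,b)" "e' \<in> E" "e' \<notin> {e, se e}" "psi e' = {a,b}"
      unfolding adj_def by auto
    then show "p \<in> R\<^sup>*" using edge_R[OF eNE] unfolding R_def X'_def by auto
  qed
  have "(w1, w2) \<in> R\<^sup>*" using w(3) rtrancl_subset_rtrancl[OF sub1] by auto
  moreover have "(u, w1) \<in> R\<^sup>*" using w(1) blk_sv(1)[OF xV(2)] unfolding R_def by auto
  moreover have "(w2, x) \<in> R\<^sup>*" using w(2) blk_sv(2)[OF xV(1)] unfolding R_def by auto
  ultimately have ux: "(u, x) \<in> R\<^sup>*" by (meson rtrancl_trans)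
  have sub2: "adj E psi \<subseteq> R\<^sup>*"
  proof
    fix p assume "p \<in> adj E psi"
    then obtain a b e' where p: "p = (a,b)" "e' \<in> E" "psi e' = {a,b}"
      unfolding adj_def by auto
    consider "e' = e" | "e' = se e" | "e' \<notin> {e, se e}" by auto
    then show "p \<in> R\<^sup>*"
    proof cases
      case 1
      then have "{a,b} = {u,x}" using p e by simp
      then have "(a = u \<and> b = x) \<or> (a = x \<and> b = u)" by (auto simp: doubleton_eq_iff)
      then show ?thesis using ux Rsym p by auto
    next
      case 2
      then have "{a,b} = {sv u, sv x}" using p e psi_se by simp
      then have ab: "(a = sv u \<and> b = sv x) \<or> (a = sv x \<and> b = sv u)" by (auto simp: doubleton_eq_iff)
      have "(sv u, u) \<in> R\<^sup>*" "(x, sv x) \<in> R\<^sup>*" using blk_sv xV unfolding R_def by auto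
      then have "(sv u, sv x) \<in> R\<^sup>*" using ux by (meson rtrancl_trans)
      then show ?thesis using ab Rsym p by auto
    next
      case 3 then show ?thesis using edge_R[OF eNE] p unfolding R_def X'_def by auto
    qed
  qed
  have conn: "\<forall>v\<in>V. \<forall>w\<in>V. (v,w) \<in> (blk PP \<union> adj X' psi)\<^sup>*"
  proof (intro ballI)
    fix v w assume "v \<in> V" "w \<in> V"
    then have "(v,w) \<in> (adj E psi)\<^sup>*" using con unfolding connected_graph_def by blast
    then show "(v,w) \<in> (blk PP \<union> adj X' psi)\<^sup>*"
      using rtrancl_subset_rtrancl[OF sub2] unfolding R_def by blast
  qed
  have fX: "finite X'" unfolding X'_def using XX_props(1)[OF eNE] fin_NE finite_subset by blast
  have Xpsi: "\<forall>e\<in>X'. \<exists>a b. psi e = {a,b} \<and> a \<in> V \<and> b \<in> V"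
  proof
    fix e' assume "e' \<in> X'"
    then have "e' \<in> E" unfolding X'_def using XX_props(1)[OF eNE] NEE by auto
    then obtain a b where "psi e' = {a,b}" using psi_two by blast
    then show "\<exists>a b. psi e' = {a,b} \<and> a \<in> V \<and> b \<in> V" using psiV[OF \<open>e' \<in> E\<close>] by auto
  qed
  have "card PP \<le> card X' + 1"
    using L0[OF fX PP_props(1) Xpsi PP_props(2) PP_props(3) PP_props(4) conn] .
  moreover have "card X' + 1 = card (XX e)"
  proof -
    have fXX: "finite (XX e)" using XX_props(1)[OF eNE] fin_NE finite_subset by blast
    have "card X' = card (XX e) - 1" unfolding X'_def using XX_props(3)[OF eNE] fXX by simp
    moreover have "card (XX e) > 0" using fXX XX_props(3)[OF eNE] card_gt_0_iff by blast
    ultimately show ?thesis by simp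
  qed
  moreover have "card PP = card (XX e) + 1" using PP_props(5) main_count XX_props(2)[OF eNE] by linarith
  ultimately show False by linarith
qed

lemma VR_ne: "VR \<noteq> {}"
proof
  assume VR0: "VR = {}"
  have c0: "comps = {}" using comps_eq VR0 by (metis image_empty)
  have ER0: "ER = {}"
  proof (rule ccontr)
    assume "ER \<noteq> {}"
    then obtain e where e: "e \<in> ER" by auto
    obtain a b where "psi e = {a,b}" using psi_two ER_psi(2)[OF e] by blast
    then have "a \<in> VR" using ER_psi(1)[OF e] by auto
    then show False using VR0 by auto
  qed
  have z: "card comps = 0" "card VR = 0" "card ER = 0"
    using c0 VR0 ER0 card.empty by metis+
  have cV: "card V = card E + 2" using main_count card_V card_E z by linarith
  define S where "S = (\<lambda>v. {v}) ` V"
  have Ep: "\<forall>e\<in>E. \<exists>a b. psi e = {a,b} \<and> a \<in> V \<and> b \<in> V"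
  proof
    fix e assume e: "e \<in> E"
    then obtain a b where "psi e = {a,b}" using psi_two by blast
    then show "\<exists>a b. psi e = {a,b} \<and> a \<in> V \<and> b \<in> V" using psiV[OF e] by auto
  qed
  have conn: "\<forall>v\<in>V. \<forall>w\<in>V. (v, w) \<in> (blk S \<union> adj E psi)\<^sup>*"
  proof (intro ballI)
    fix v w assume "v \<in> V" "w \<in> V"
    then have "(v,w) \<in> (adj E psi)\<^sup>*" using con unfolding connected_graph_def by blast
    moreover have "(adj E psi)\<^sup>* \<subseteq> (blk S \<union> adj E psi)\<^sup>*" by (rule rtrancl_mono) auto
    ultimately show "(v, w) \<in> (blk S \<union> adj E psi)\<^sup>*" by blast
  qed
  have fS: "finite S" unfolding S_def using finV by simp
  have nS: "\<forall>B\<in>S. B \<noteq> {}" unfolding S_def by auto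
  have dS: "\<forall>B\<in>S. \<forall>B'\<in>S. B \<noteq> B' \<longrightarrow> B \<inter> B' = {}" unfolding S_def by auto
  have uS: "\<Union>S = V" unfolding S_def by auto
  have "card S \<le> card E + 1" by (rule L0[OF finE fS Ep nS dS uS conn])
  moreover have "card S = card V" unfolding S_def by (rule card_image) (auto simp: inj_on_def)
  ultimately show False using cV by linarith
qed
lemma lap_add: "laplacian E psi (\<lambda>w. f w + g w) v = laplacian E psi f v + laplacian E psi g v"
  unfolding laplacian_def by (simp add: sum.distrib[symmetric] algebra_simps)

lemma lap_zero: "laplacian E psi (\<lambda>w. 0) v = 0"
  unfolding laplacian_def by simp

lemma le_refl: "lin_equiv V E psi D D"
  unfolding lin_equiv_def using lap_zero by (metis diff_self)

lemma le_trans: assumes "lin_equiv V E psi D1 D2" "lin_equiv V E psi D2 D3"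
  shows "lin_equiv V E psi D1 D3"
proof -
  obtain f g where f: "\<forall>v\<in>V. D2 v - D1 v = laplacian E psi f v"
    and g: "\<forall>v\<in>V. D3 v - D2 v = laplacian E psi g v" using assms unfolding lin_equiv_def by blast
  have "\<forall>v\<in>V. D3 v - D1 v = laplacian E psi (\<lambda>w. f w + g w) v"
  proof
    fix v assume v: "v \<in> V"
    have "D3 v - D1 v = (D2 v - D1 v) + (D3 v - D2 v)" by simp
    also have "\<dots> = laplacian E psi f v + laplacian E psi g v" using f g v by simp
    finally show "D3 v - D1 v = laplacian E psi (\<lambda>w. f w + g w) v" using lap_add by simp
  qed
  then show ?thesis unfolding lin_equiv_def by blast
qed

lemma le_add: assumes "lin_equiv V E psi D1 D1'" "lin_equiv V E psi D2 D2'"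
  shows "lin_equiv V E psi (\<lambda>v. D1 v + D2 v) (\<lambda>v. D1' v + D2' v)"
proof -
  obtain f g where f: "\<forall>v\<in>V. D1' v - D1 v = laplacian E psi f v"
    and g: "\<forall>v\<in>V. D2' v - D2 v = laplacian E psi g v" using assms unfolding lin_equiv_def by blast
  have "\<forall>v\<in>V. (D1' v + D2' v) - (D1 v + D2 v) = laplacian E psi (\<lambda>w. f w + g w) v"
  proof
    fix v assume v: "v \<in> V"
    have "(D1' v + D2' v) - (D1 v + D2 v) = (D1' v - D1 v) + (D2' v - D2 v)" by simp
    also have "\<dots> = laplacian E psi f v + laplacian E psi g v" using f g v by simp
    finally show "(D1' v + D2' v) - (D1 v + D2 v) = laplacian E psi (\<lambda>w. f w + g w) v" using lap_add by simp
  qed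
  then show ?thesis unfolding lin_equiv_def by blast
qed

definition pd :: "'v \<Rightarrow> 'v \<Rightarrow> int" where
  "pd u = (\<lambda>w. (if w = u then 1 else 0) + (if w = sv u then 1 else 0))"

lemma nonreal_edge: assumes "e \<in> E" "psi e = {u, x}" "u \<in> V - VR" shows "se e \<noteq> e"
proof
  assume "se e = e"
  then have "e \<notin> isolated_real_edges V E psi sv se" using noiso by auto
  then have "psi e \<subseteq> VR" using assms(1) \<open>se e = e\<close> unfolding isolated_real_edges_def by auto
  then show False using assms(2,3) by auto
qed

lemma lap_expand: "laplacian E psi f v =
   (\<Sum>e'\<in>E. if v \<in> psi e' then (\<Sum>w\<in>psi e' - {v}. f w - f v) else 0)"
  unfolding laplacian_def by (rule sum.inter_filter[OF finE])

lemma fire: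
  assumes e: "e \<in> E" "psi e = {u, x}" and u: "u \<in> V - VR" and x: "x \<notin> {u, sv u}"
  shows "lin_equiv V E psi (pd u) (pd x)"
proof -
  define E0 where "E0 = E - {e, se e}"
  define S where "S = {w \<in> V. (u,w) \<in> (adj E0 psi)\<^sup>* \<or> (sv u, w) \<in> (adj E0 psi)\<^sup>*}"
  define f where "f = (\<lambda>w. if w \<in> S then 1 else 0::int)"
  have see: "se e \<noteq> e" by (rule nonreal_edge[OF e u])
  have seE: "se e \<in> E" "psi (se e) = {sv u, sv x}" using se_E[OF e(1)] psi_se[OF e(1)] e(2) by auto
  have uV0: "u \<in> V" "x \<in> V" using u psiV[OF e(1)] e(2) by auto
  have uV: "u \<in> V" "sv u \<in> V" "x \<in> V" "sv x \<in> V" using uV0 sv_V[OF uV0(1)] sv_V[OF uV0(2)] by auto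
  have ssu: "sv (sv u) = u" "sv (sv x) = x" using sv_sv uV0 by auto
  have ux: "u \<noteq> x" "sv u \<noteq> sv x" "u \<noteq> sv x" "sv u \<noteq> x"
  proof -
    show "u \<noteq> x" using x by auto
    show "sv u \<noteq> x" using x by auto
    show "sv u \<noteq> sv x"
    proof
      assume "sv u = sv x" then have "sv (sv u) = sv (sv x)" by simp
      then show False using ssu \<open>u \<noteq> x\<close> by simp
    qed
    show "u \<noteq> sv x"
    proof
      assume "u = sv x" then have "sv u = sv (sv x)" by simp
      then show False using ssu x by simp
    qed
  qed
  have uS: "u \<in> S" "sv u \<in> S" unfolding S_def using uV by auto
  have xS: "x \<notin> S" "sv x \<notin> S"
  proof -
    show "x \<notin> S"
    proof
      assume "x \<in> S"
      then obtain w1 where "w1 \<in> {u, sv u}" "(w1, x) \<in> (adj E0 psi)\<^sup>*" unfolding S_def by auto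
      then show False using bridge[OF e u x, of w1 x] unfolding E0_def by auto
    qed
    show "sv x \<notin> S"
    proof
      assume "sv x \<in> S"
      then obtain w1 where "w1 \<in> {u, sv u}" "(w1, sv x) \<in> (adj E0 psi)\<^sup>*" unfolding S_def by auto
      then show False using bridge[OF e u x, of w1 "sv x"] unfolding E0_def by auto
    qed
  qed
  have clos: "\<And>e' a b. e' \<in> E0 \<Longrightarrow> a \<in> psi e' \<Longrightarrow> b \<in> psi e' \<Longrightarrow> f a = f b"
  proof -
    fix e' a b assume h: "e' \<in> E0" "a \<in> psi e'" "b \<in> psi e'"
    have e'E: "e' \<in> E" using h(1) unfolding E0_def by auto
    obtain p q where pq: "psi e' = {p,q}" using psi_two[OF e'E] by blast
    have ab: "a \<in> V" "b \<in> V" using psiV[OF e'E] h by auto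
    have "(a,b) \<in> (adj E0 psi)\<^sup>* \<and> (b,a) \<in> (adj E0 psi)\<^sup>*"
    proof (cases "a = b")
      case True then show ?thesis by simp
    next
      case False
      then have "psi e' = {a,b}" using pq h by auto
      then have "(a,b) \<in> adj E0 psi" using h(1) unfolding adj_def by blast
      then have "(a,b) \<in> adj E0 psi" "(b,a) \<in> adj E0 psi" using adj_sym by auto
      then show ?thesis by (meson r_into_rtrancl)
    qed
    then have "a \<in> S \<longleftrightarrow> b \<in> S" unfolding S_def using ab
      by (auto intro: rtrancl_trans)
    then show "f a = f b" unfolding f_def by simp
  qed
  have "\<forall>v\<in>V. pd x v - pd u v = laplacian E psi f v"
  proof
    fix v assume vV: "v \<in> V"
    define h where "h = (\<lambda>e'. if v \<in> psi e' then (\<Sum>w\<in>psi e' - {v}. f w - f v) else 0)"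
    have L1: "laplacian E psi f v = sum h E" unfolding h_def by (rule lap_expand)
    have L2: "sum h E = h e + sum h (E - {e})" using sum.remove[OF finE e(1)] .
    have L3: "sum h (E - {e}) = h (se e) + sum h (E - {e} - {se e})"
      using sum.remove[of "E - {e}" "se e" h] finE seE(1) see by auto
    have L4: "sum h (E - {e} - {se e}) = 0"
    proof (rule sum.neutral, rule ballI)
      fix e' assume "e' \<in> E - {e} - {se e}"
      then have e'0: "e' \<in> E0" unfolding E0_def by auto
      show "h e' = 0"
      proof (cases "v \<in> psi e'")
        case True
        have "\<forall>w\<in>psi e' - {v}. f w - f v = 0" using clos[OF e'0 _ True] by auto
        then show ?thesis unfolding h_def using True by simp
      next
        case False then show ?thesis unfolding h_def by simp
      qed
    qed
    have L5: "h e = (if v = x then 1 else 0) - (if v = u then 1 else 0)"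
    proof -
      consider "v = u" | "v = x" | "v \<notin> {u,x}" by auto
      then show ?thesis
      proof cases
        case 1
        then have "psi e - {v} = {x}" using e(2) ux by auto
        then show ?thesis unfolding h_def using 1 e(2) ux uS xS f_def by auto
      next
        case 2
        then have "psi e - {v} = {u}" using e(2) ux by auto
        then show ?thesis unfolding h_def using 2 e(2) ux uS xS f_def by auto
      qed (auto simp: h_def e(2))
    qed
    have L6: "h (se e) = (if v = sv x then 1 else 0) - (if v = sv u then 1 else 0)"
    proof -
      consider "v = sv u" | "v = sv x" | "v \<notin> {sv u, sv x}" by auto
      then show ?thesis
      proof cases
        case 1
        then have "psi (se e) - {v} = {sv x}" using seE(2) ux by auto
        then show ?thesis unfolding h_def using 1 seE(2) ux uS xS f_def by auto
      next
        case 2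
        then have "psi (se e) - {v} = {sv u}" using seE(2) ux by auto
        then show ?thesis unfolding h_def using 2 seE(2) ux uS xS f_def by auto
      qed (auto simp: h_def seE(2))
    qed
    have "pd x v - pd u v = ((if v = x then 1 else 0) - (if v = u then 1 else 0)) +
       ((if v = sv x then 1 else 0) - (if v = sv u then 1 else 0))" unfolding pd_def by simp
    then show "pd x v - pd u v = laplacian E psi f v" using L1 L2 L3 L4 L5 L6 by linarith
  qed
  then show ?thesis unfolding lin_equiv_def by blast
qed
lemma pd_real: assumes "v \<in> VR"
  shows "divisor V (pd v) \<and> effective V (pd v) \<and> totally_real V sv (pd v)"
proof -
  have vV: "v \<in> V" "sv v = v" using assms unfolding real_vertices_def by auto
  have d: "divisor V (pd v)" unfolding divisor_def pd_def using vV by auto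
  have ef: "effective V (pd v)" unfolding effective_def pd_def by auto
  have r: "real_divisor V sv (pd v)"
    unfolding real_divisor_def
  proof
    fix w assume w: "w \<in> V"
    have "sv w = v \<longleftrightarrow> w = v" using w vV sv_sv by metis
    then show "pd v (sv w) = pd v w" unfolding pd_def using vV by simp
  qed
  have "\<forall>w\<in>V. pd v w \<noteq> 0 \<longrightarrow> w \<in> VR" unfolding pd_def using vV assms by auto
  then show ?thesis using d ef r unfolding totally_real_def by auto
qed

lemma pd_sv: assumes "u \<in> V" shows "pd (sv u) = pd u"
  unfolding pd_def using sv_sv[OF assms] by (auto simp: fun_eq_iff)

lemma chain: "u \<in> V - VR \<Longrightarrow> (u, r) \<in> (adj E psi) ^^ n \<Longrightarrow> r \<in> VR \<Longrightarrow>
  \<exists>T. divisor V T \<and> effective V T \<and> totally_real V sv T \<and> lin_equiv V E psi (pd u) T"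
proof (induction n arbitrary: u)
  case 0
  then show ?case by auto
next
  case (Suc n)
  obtain y where y: "(u,y) \<in> adj E psi" "(y, r) \<in> (adj E psi) ^^ n" using relpow_Suc_D2[OF Suc.prems(2)] by blast
  obtain e where e: "e \<in> E" "psi e = {u, y}" using y(1) unfolding adj_def by auto
  have yV: "y \<in> V" using psiV[OF e(1)] e(2) by auto
  have uV: "u \<in> V" using Suc.prems(1) by auto
  show ?case
  proof (cases "y \<in> {u, sv u}")
    case True
    then have "y \<in> V - VR" using Suc.prems(1) nonreal_sv by auto
    then obtain T where T: "divisor V T \<and> effective V T \<and> totally_real V sv T \<and> lin_equiv V E psi (pd y) T"
      using Suc.IH y(2) Suc.prems(3) by blast
    have "pd y = pd u" using True pd_sv[OF uV] by auto
    then show ?thesis using T by auto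
  next
    case False
    have fy: "lin_equiv V E psi (pd u) (pd y)" by (rule fire[OF e Suc.prems(1) False])
    show ?thesis
    proof (cases "y \<in> VR")
      case True
      then show ?thesis using pd_real fy by blast
    next
      case False
      then have "y \<in> V - VR" using yV by auto
      then obtain T where T: "divisor V T \<and> effective V T \<and> totally_real V sv T \<and> lin_equiv V E psi (pd y) T"
        using Suc.IH y(2) Suc.prems(3) by blast
      then show ?thesis using le_trans[OF fy] by blast
    qed
  qed
qed

lemma key: assumes "u \<in> V - VR"
  shows "\<exists>T. divisor V T \<and> effective V T \<and> totally_real V sv T \<and> lin_equiv V E psi (pd u) T"
proof -
  obtain r where r: "r \<in> VR" using VR_ne by auto
  have "(u, r) \<in> (adj E psi)\<^sup>*" using con assms r VR_sub unfolding connected_graph_def by blast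
  then obtain n where "(u, r) \<in> (adj E psi) ^^ n" using rtrancl_power by blast
  then show ?thesis using chain assms r by blast
qed

lemma main: "divisor V D \<Longrightarrow> effective V D \<Longrightarrow> real_divisor V sv D \<Longrightarrow>
   (\<Sum>v\<in>V - VR. nat (D v)) = N \<Longrightarrow>
   \<exists>D'. divisor V D' \<and> effective V D' \<and> totally_real V sv D' \<and> lin_equiv V E psi D D'"
proof (induction N arbitrary: D rule: less_induct)
  case (less N)
  have finNR: "finite (V - VR)" using finV by simp
  show ?case
  proof (cases "\<exists>u\<in>V - VR. D u > 0")
    case False
    have "totally_real V sv D"
      unfolding totally_real_def
    proof
      show "real_divisor V sv D" by (rule less.prems(3))
      show "\<forall>v\<in>V. D v \<noteq> 0 \<longrightarrow> v \<in> VR"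
        using False less.prems(2) unfolding effective_def by force
    qed
    then show ?thesis using less.prems le_refl by blast
  next
    case True
    then obtain u where u: "u \<in> V - VR" "D u > 0" by blast
    have uV: "u \<in> V" "sv u \<in> V" "sv u \<noteq> u" "sv (sv u) = u" using u nonreal_sv sv_sv by auto
    have Dsu: "D (sv u) = D u" using less.prems(3) uV unfolding real_divisor_def by auto
    define D1 where "D1 = (\<lambda>w. D w - pd u w)"
    have pdu: "\<And>w. pd u w = (if w = u \<or> w = sv u then 1 else 0)" unfolding pd_def using uV by auto
    have d1: "divisor V D1" using less.prems(1) uV unfolding divisor_def D1_def pdu by auto
    have e1: "effective V D1" using less.prems(2) u Dsu unfolding effective_def D1_def pdu by auto
    have r1: "real_divisor V sv D1" unfolding real_divisor_def
    proof
      fix w assume w: "w \<in> V"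
      have "sv w = u \<longleftrightarrow> w = sv u" using w uV sv_sv by metis
      moreover have "sv w = sv u \<longleftrightarrow> w = u" using w uV sv_sv by metis
      ultimately show "D1 (sv w) = D1 w" unfolding D1_def pdu using less.prems(3) w
        unfolding real_divisor_def by auto
    qed
    have lt: "(\<Sum>v\<in>V - VR. nat (D1 v)) < N"
    proof -
      have "(\<Sum>v\<in>V - VR. nat (D1 v)) < (\<Sum>v\<in>V - VR. nat (D v))"
      proof (rule sum_strict_mono_ex1[OF finNR])
        show "\<forall>x\<in>V - VR. nat (D1 x) \<le> nat (D x)" unfolding D1_def pdu by auto
        have "nat (D1 u) < nat (D u)" using u unfolding D1_def pdu by auto
        then show "\<exists>a\<in>V - VR. nat (D1 a) < nat (D a)" using u(1) by blast
      qed
      then show ?thesis using less.prems(4) by simp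
    qed
    obtain D1' where D1': "divisor V D1'" "effective V D1'" "totally_real V sv D1'" "lin_equiv V E psi D1 D1'"
      using less.IH[OF lt d1 e1 r1] by blast
    obtain T where T: "divisor V T" "effective V T" "totally_real V sv T" "lin_equiv V E psi (pd u) T"
      using key[OF u(1)] by blast
    define D' where "D' = (\<lambda>w. D1' w + T w)"
    have "lin_equiv V E psi (\<lambda>w. D1 w + pd u w) D'" unfolding D'_def by (rule le_add[OF D1'(4) T(4)])
    moreover have "(\<lambda>w. D1 w + pd u w) = D" unfolding D1_def by simp
    ultimately have le: "lin_equiv V E psi D D'" by simp
    have "divisor V D'" using D1'(1) T(1) unfolding divisor_def D'_def by auto
    moreover have "effective V D'" using D1'(2) T(2) unfolding effective_def D'_def by auto
    moreover have "totally_real V sv D'" using D1'(3) T(3)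
      unfolding totally_real_def real_divisor_def D'_def by fastforce
    ultimately show ?thesis using le by blast
  qed
qed
end
theorem theorem3:
  fixes V :: "'v set" and E :: "'e set" and psi :: "'e \<Rightarrow> 'v set"
    and sv :: "'v \<Rightarrow> 'v" and se :: "'e \<Rightarrow> 'e" and D :: "'v \<Rightarrow> int"
  assumes "graph V E psi"
    and "connected_graph V E psi"
    and "real_structure V E psi sv se"
    and "M_graph V E psi sv se"
    and "divisor V D" and "effective V D" and "real_divisor V sv D"
  shows "\<exists>D'. divisor V D' \<and> effective V D' \<and> totally_real V sv D' \<and>
              lin_equiv V E psi D D'"
proof -
  interpret mg V E psi sv se using assms(1-4) by unfold_locales
  show ?thesis using main[OF assms(5-7) refl] .
qed

end
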